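(* Let $\mathcal{F}$ be a filtration of a finite simplicial complex and $\sigma\notin\mathcal{F}$ a simplex such that $\mathcal{F}\cup\sigma$ (the filtration with $\sigma$ inserted at some filtration value) is a valid filtration. For $\alpha\in(1,\infty)$ and $k\ge1$ let $\Pi_k(\alpha;\mathcal{F})$ be the number of points $(b,d)\in\mathrm{dgm}_k(\mathcal{F})$ with $d/b\ge\alpha$. If $\dim\sigma\in\{k,k+1\}$, then \[ \Pi_k(\alpha;\mathcal{F})-1\le\Pi_k(\alpha;\mathcal{F}\cup\sigma)\le\Pi_k(\alpha;\mathcal{F})+1; \] otherwise $\Pi_k(\alpha;\mathcal{F}\cup\sigma)=\Pi_k(\alpha;\mathcal{F})$.
   Context: A filtration assigns to each simplex a filtration value $w$ such that faces enter no later than their cofaces; the $k$-th persistent homology (field coefficients) decomposes into intervals $[b,d)$ with $b<d\le\infty$, and $\mathrm{dgm}_k$ is the multiset of such $(b,d)$. Filtration values of the simplices contributing births are taken positive so that the ratio $d/b$ is defined, with $d=\infty$ giving ratio $\infty$. Ties between simplices with equal filtration values are broken by an arbitrary but consistent total order. *)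

theory Defs
  imports "HOL-Analysis.Analysis" "HOL-Library.Function_Algebras" "HOL-Library.Multiset"
begin

text \<open>Simplices are finite nonempty sets of vertices; vertices carry a linear order,
  used only to orient simplices (sign of a face).  A filtration is given by a list of
  distinct simplices (the total order, ties already broken) and a weight function
  assigning the filtration value to each simplex.\<close>

definition valid_filtration :: "('v::linorder) set list \<Rightarrow> ('v set \<Rightarrow> real) \<Rightarrow> bool" where
  "valid_filtration L w \<longleftrightarrow>
     distinct L \<and>
     (\<forall>i < length L. finite (L ! i) \<and> L ! i \<noteq> {} \<and>
        (\<forall>\<tau>. \<tau> \<noteq> {} \<and> \<tau> \<subset> L ! i \<longrightarrow> \<tau> \<in> set (take i L))) \<and>
     sorted (map w L)"

definition insert_simplex ::
  "'v set list \<Rightarrow> ('v set \<Rightarrow> real) \<Rightarrow> 'v set \<Rightarrow> real \<Rightarrow> nat \<Rightarrow> 'v set list \<times> ('v set \<Rightarrow> real)" where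
  "insert_simplex L w s a p = (take p L @ s # drop p L, w(s := a))"

definition chains :: "'f itself \<Rightarrow> 'v set set \<Rightarrow> nat \<Rightarrow> ('v set \<Rightarrow> 'f::field) set" where
  "chains _ K k = {c. \<forall>\<tau>. c \<tau> \<noteq> 0 \<longrightarrow> \<tau> \<in> K \<and> card \<tau> = k + 1}"

text \<open>Simplicial boundary with the orientation induced by the vertex order:
  the face obtained by deleting vertex v from the sorted simplex gets sign (-1)^(position of v).\<close>
definition bd :: "('v::linorder set \<Rightarrow> 'f::field) \<Rightarrow> 'v set \<Rightarrow> 'f" where
  "bd c \<tau> = (\<Sum>v \<in> {v. v \<notin> \<tau> \<and> c (insert v \<tau>) \<noteq> 0}.
               (-1) ^ card {u \<in> \<tau>. u < v} * c (insert v \<tau>))"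

definition fscale :: "'f::field \<Rightarrow> ('a \<Rightarrow> 'f) \<Rightarrow> ('a \<Rightarrow> 'f)" where
  "fscale a f = (\<lambda>x. a * f x)"

abbreviation fdim :: "('a \<Rightarrow> 'f::field) set \<Rightarrow> nat" where
  "fdim S \<equiv> vector_space.dim fscale S"

definition cycles :: "'f itself \<Rightarrow> 'v::linorder set set \<Rightarrow> nat \<Rightarrow> ('v set \<Rightarrow> 'f::field) set" where
  "cycles F K k = {c \<in> chains F K k. bd c = 0}"

definition boundaries :: "'f itself \<Rightarrow> 'v::linorder set set \<Rightarrow> nat \<Rightarrow> ('v set \<Rightarrow> 'f::field) set" where
  "boundaries F K k = bd ` chains F K (k + 1)"

text \<open>Rank of the map H_k(K_i) \<rightarrow> H_k(K_j) induced by inclusion, K_i = first i simplices.\<close>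
definition prank :: "'f::field itself \<Rightarrow> 'v::linorder set list \<Rightarrow> nat \<Rightarrow> nat \<Rightarrow> nat \<Rightarrow> int" where
  "prank F L k i j =
     int (fdim (cycles F (set (take i L)) k))
     - int (fdim (cycles F (set (take i L)) k \<inter> boundaries F (set (take j L)) k))"

text \<open>Multiplicity of the index interval born when simplex i (1-based) enters and dying
  when simplex j enters; and of the essential interval born at i.\<close>
definition pmult :: "'f::field itself \<Rightarrow> 'v::linorder set list \<Rightarrow> nat \<Rightarrow> nat \<Rightarrow> nat \<Rightarrow> int" where
  "pmult F L k i j = prank F L k i (j - 1) - prank F L k (i - 1) (j - 1)
                     - prank F L k i j + prank F L k (i - 1) j"

definition pmult_inf :: "'f::field itself \<Rightarrow> 'v::linorder set list \<Rightarrow> nat \<Rightarrow> nat \<Rightarrow> int" where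
  "pmult_inf F L k i = prank F L k i (length L) - prank F L k (i - 1) (length L)"

definition dgm :: "'f::field itself \<Rightarrow> 'v::linorder set list \<Rightarrow> ('v set \<Rightarrow> real) \<Rightarrow> nat
                    \<Rightarrow> (real \<times> ereal) multiset" where
  "dgm F L w k =
     (\<Sum>i \<in> {1..length L}. \<Sum>j \<in> {i<..length L}.
        if w (L ! (i - 1)) < w (L ! (j - 1))
        then replicate_mset (nat (pmult F L k i j)) (w (L ! (i - 1)), ereal (w (L ! (j - 1))))
        else {#})
   + (\<Sum>i \<in> {1..length L}. replicate_mset (nat (pmult_inf F L k i)) (w (L ! (i - 1)), \<infinity>))"

definition Pi_count :: "'f::field itself \<Rightarrow> 'v::linorder set list \<Rightarrow> ('v set \<Rightarrow> real) \<Rightarrow> nat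
                        \<Rightarrow> real \<Rightarrow> nat" where
  "Pi_count F L w k \<alpha> = size (filter_mset (\<lambda>(b, d). d / ereal b \<ge> ereal \<alpha>) (dgm F L w k))"

end

theory Submission
  imports Defs
begin
interpretation fvs: vector_space "fscale :: 'f::field \<Rightarrow> ('a \<Rightarrow> 'f) \<Rightarrow> ('a \<Rightarrow> 'f)"
  by unfold_locales (auto simp: fscale_def fun_eq_iff algebra_simps)

lemma fscale_apply[simp]: "fscale c f x = c * f x" by (simp add: fscale_def)

lemma sum_fun_apply: "finite A \<Longrightarrow> (sum g A) x = (\<Sum>a\<in>A. g a x)"
  by (induction A rule: finite_induct) auto

lemma dim_one_step:
  fixes S T :: "('a \<Rightarrow> 'f::field) set"
  assumes S: "fvs.subspace S" and T: "fvs.subspace T" and ST: "S \<subseteq> T"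
    and fin: "finite G" "T \<subseteq> fvs.span G"
    and y: "y \<in> T" "y \<notin> S" and ext: "\<And>v. v \<in> T \<Longrightarrow> \<exists>c. v - fscale c y \<in> S"
  shows "fvs.dim T = fvs.dim S + 1"
proof -
  obtain B where B: "B \<subseteq> S" "fvs.independent B" "S \<subseteq> fvs.span B" "card B = fvs.dim S"
    using fvs.basis_exists by blast
  have finB: "finite B"
    using fvs.independent_span_bound[OF fin(1) B(2)] B(1) ST fin(2) by blast
  have spB: "fvs.span B = S" using B S
    by (metis fvs.span_minimal fvs.span_subspace)
  have yB: "y \<notin> fvs.span B" using spB y by simp
  have ind: "fvs.independent (insert y B)" using fvs.independent_insertI[OF yB B(2)] .
  have sub: "insert y B \<subseteq> T" using B(1) ST y by auto
  have spT: "T \<subseteq> fvs.span (insert y B)"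
  proof
    fix v assume "v \<in> T"
    then obtain c where "v - fscale c y \<in> S" using ext by blast
    then have "v - fscale c y \<in> fvs.span (insert y B)"
      using spB fvs.span_mono[of B "insert y B"] by auto
    moreover have "fscale c y \<in> fvs.span (insert y B)"
      by (simp add: fvs.span_base fvs.span_scale)
    ultimately have "(v - fscale c y) + fscale c y \<in> fvs.span (insert y B)"
      by (rule fvs.span_add)
    then show "v \<in> fvs.span (insert y B)" by simp
  qed
  have "fvs.dim T = card (insert y B)"
    using fvs.basis_card_eq_dim[OF sub spT ind] by simp
  also have "\<dots> = card B + 1" proof -
    have "y \<notin> B" using B(1) y by auto
    then show ?thesis using finB by simp
  qed
  finally show ?thesis using B(4) by simp
qed

lemma dim_elim:
  fixes S :: "('a \<Rightarrow> 'f::field) set"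
  assumes S: "fvs.subspace S" and fin: "finite G" "S \<subseteq> fvs.span G"
  shows "int (fvs.dim S) = int (fvs.dim {v\<in>S. v t = 0}) + (if \<exists>v\<in>S. v t \<noteq> 0 then 1 else 0)"
proof (cases "\<exists>v\<in>S. v t \<noteq> 0")
  case False
  then have "{v\<in>S. v t = 0} = S" by auto
  then show ?thesis using False by simp
next
  case True
  then obtain y where y: "y \<in> S" "y t \<noteq> 0" by blast
  have S0: "fvs.subspace {v\<in>S. v t = 0}" using S
    unfolding fvs.subspace_def by auto
  have "fvs.dim S = fvs.dim {v\<in>S. v t = 0} + 1"
  proof (rule dim_one_step[OF S0 S _ fin y(1)])
    show "{v \<in> S. v t = 0} \<subseteq> S" by auto
    show "y \<notin> {v \<in> S. v t = 0}" using y by auto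
    fix v assume v: "v \<in> S"
    show "\<exists>c. v - fscale c y \<in> {v \<in> S. v t = 0}"
    proof (intro exI[of _ "v t / y t"] CollectI conjI)
      show "v - fscale (v t / y t) y \<in> S"
        using S v y(1) by (metis fvs.subspace_diff fvs.subspace_scale)
      show "(v - fscale (v t / y t) y) t = 0" using y(2) by simp
    qed
  qed
  then show ?thesis using True by simp
qed

lemma add_nz: "a + b \<noteq> (0::'a::monoid_add) \<Longrightarrow> a \<noteq> 0 \<or> b \<noteq> 0" by auto

definition delta :: "'a \<Rightarrow> 'a \<Rightarrow> 'f::field" where
  "delta t = (\<lambda>x. if x = t then 1 else 0)"

lemma chains_span:
  assumes "finite K"
  shows "chains TYPE('f::field) K m \<subseteq> fvs.span (delta ` K :: ('a set \<Rightarrow> 'f) set)"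
proof
  fix c :: "'a set \<Rightarrow> 'f" assume c: "c \<in> chains TYPE('f) K m"
  have "c = (\<Sum>t\<in>K. fscale (c t) (delta t))"
  proof
    fix x
    show "c x = (\<Sum>t\<in>K. fscale (c t) (delta t)) x"
      using c assms by (auto simp: sum_fun_apply delta_def chains_def if_distrib sum.delta cong: if_cong)
  qed
  also have "\<dots> \<in> fvs.span (delta ` K)"
    by (intro fvs.span_sum fvs.span_scale fvs.span_base) auto
  finally show "c \<in> fvs.span (delta ` K)" .
qed

lemma chains_subspace: "fvs.subspace (chains TYPE('f::field) K m)"
  unfolding fvs.subspace_def chains_def by (auto dest!: add_nz)

lemma finite_cofaces:
  assumes "finite K" shows "finite {v. v \<notin> t \<and> insert v t \<in> K}"
proof -
  have "inj_on (\<lambda>v. insert v t) {v. v \<notin> t \<and> insert v t \<in> K}"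
    by (auto simp: inj_on_def)
  moreover have "(\<lambda>v. insert v t) ` {v. v \<notin> t \<and> insert v t \<in> K} \<subseteq> K" by auto
  ultimately show ?thesis using assms finite_imageD finite_subset by metis
qed

definition supp_in :: "('a \<Rightarrow> 'f::zero) \<Rightarrow> 'a set \<Rightarrow> bool" where
  "supp_in c K \<longleftrightarrow> (\<forall>t. c t \<noteq> 0 \<longrightarrow> t \<in> K)"

lemma bd_alt:
  fixes c :: "'v::linorder set \<Rightarrow> 'f::field"
  assumes "finite K" "supp_in c K"
  shows "bd c t = (\<Sum>v \<in> {v. v \<notin> t \<and> insert v t \<in> K}. (-1) ^ card {u \<in> t. u < v} * c (insert v t))"
  unfolding bd_def
  by (rule sum.mono_neutral_left[OF finite_cofaces[OF assms(1)]]) (use assms(2) in \<open>auto simp: supp_in_def\<close>)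

lemma bd_add:
  fixes c d :: "'v::linorder set \<Rightarrow> 'f::field"
  assumes "finite K" "supp_in c K" "supp_in d K"
  shows "bd (c + d) = bd c + bd d"
proof
  fix t
  have "supp_in (c + d) K" using assms(2,3) by (auto simp: supp_in_def dest!: add_nz)
  then show "bd (c + d) t = (bd c + bd d) t"
    using assms by (simp add: bd_alt[OF assms(1)] sum.distrib algebra_simps)
qed

lemma bd_scale:
  fixes c :: "'v::linorder set \<Rightarrow> 'f::field"
  assumes "finite K" "supp_in c K"
  shows "bd (fscale a c) = fscale a (bd c)"
proof
  fix t
  have "supp_in (fscale a c) K" using assms(2) by (auto simp: supp_in_def)
  then show "bd (fscale a c) t = fscale a (bd c) t"
    using assms by (simp add: bd_alt[OF assms(1)] sum_distrib_left algebra_simps)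
qed

lemma bd_zero[simp]: "bd 0 = 0"
  by (simp add: bd_def fun_eq_iff)

lemma chains_supp: "c \<in> chains F K m \<Longrightarrow> supp_in c K"
  by (auto simp: chains_def supp_in_def)

lemma cycles_subspace:
  assumes "finite K"
  shows "fvs.subspace (cycles TYPE('f::field) K m :: ('v::linorder set \<Rightarrow> 'f) set)"
  unfolding fvs.subspace_def cycles_def
  using chains_subspace[unfolded fvs.subspace_def]
  by (auto simp: bd_add[OF assms] bd_scale[OF assms] chains_supp)

lemma boundaries_subspace:
  assumes "finite K"
  shows "fvs.subspace (boundaries TYPE('f::field) K m :: ('v::linorder set \<Rightarrow> 'f) set)"
  unfolding fvs.subspace_def boundaries_def
proof (intro conjI ballI allI)
  have "(0::'v set \<Rightarrow> 'f) \<in> chains TYPE('f) K (m+1)" by (simp add: chains_def)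
  then show "(0::'v set \<Rightarrow> 'f) \<in> bd ` chains TYPE('f) K (m + 1)" by (metis bd_zero image_eqI)
next
  fix x y assume "x \<in> bd ` chains TYPE('f) K (m + 1)" "y \<in> bd ` chains TYPE('f) K (m + 1)"
  then obtain c d where c: "c \<in> chains TYPE('f) K (m + 1)" "x = bd c"
     and d: "d \<in> chains TYPE('f) K (m + 1)" "y = bd d" by auto
  have "c + d \<in> chains TYPE('f) K (m + 1)" using c d by (auto simp: chains_def dest!: add_nz)
  moreover have "x + y = bd (c + d)" using c d by (simp add: bd_add[OF assms] chains_supp)
  ultimately show "x + y \<in> bd ` chains TYPE('f) K (m + 1)" by blast
next
  fix a x assume "x \<in> bd ` chains TYPE('f) K (m + 1)"
  then obtain c where c: "c \<in> chains TYPE('f) K (m + 1)" "x = bd c" by auto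
  have "fscale a c \<in> chains TYPE('f) K (m + 1)" using c by (auto simp: chains_def)
  moreover have "fscale a x = bd (fscale a c)" using c by (simp add: bd_scale[OF assms] chains_supp)
  ultimately show "fscale a x \<in> bd ` chains TYPE('f) K (m + 1)" by blast
qed

lemma size_filter_sum_mset:
  "size (filter_mset P (sum M A)) = (\<Sum>a\<in>A. size (filter_mset P (M a)))"
  by (induction A rule: infinite_finite_induct) auto

lemma size_filter_replicate:
  "size (filter_mset P (replicate_mset n x)) = (if P x then n else 0)"
  by (induction n) auto

lemma downclosed_eq_lessThan:
  fixes S :: "nat set"
  assumes "finite S" "\<And>q q'. q \<in> S \<Longrightarrow> q' < q \<Longrightarrow> q' \<in> S"
  shows "S = {..<card S}"
proof (cases "S = {}")
  case True then show ?thesis by simp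
next
  case False
  have "S = {..Max S}"
  proof
    show "S \<subseteq> {..Max S}" using assms(1) by auto
    show "{..Max S} \<subseteq> S"
    proof
      fix q assume "q \<in> {..Max S}"
      then have "q = Max S \<or> q < Max S" by auto
      then show "q \<in> S" using Max_in[OF assms(1) False] assms(2) by blast
    qed
  qed
  then show ?thesis by (metis card_atMost lessThan_Suc_atMost)
qed

lemma telescope:
  fixes g :: "nat \<Rightarrow> int"
  assumes "T \<le> N"
  shows "(\<Sum>j\<in>{T<..N}. g (j - 1) - g j) = g T - g N"
  using assms
proof (induction N)
  case 0 then show ?case by simp
next
  case (Suc N)
  show ?case
  proof (cases "T = Suc N")
    case True then show ?thesis by simp
  next
    case False
    then have "T \<le> N" using Suc.prems by simp
    have "{T<..Suc N} = insert (Suc N) {T<..N}" using \<open>T \<le> N\<close> by auto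
    then show ?thesis using Suc.IH[OF \<open>T \<le> N\<close>] by simp
  qed
qed

definition thr :: "'v set list \<Rightarrow> ('v set \<Rightarrow> real) \<Rightarrow> real \<Rightarrow> nat \<Rightarrow> nat" where
  "thr L w \<alpha> i = length (filter (\<lambda>t. w t < \<alpha> * w (L ! (i - 1))) L)"

lemma thr_props:
  assumes sorted: "sorted (map w L)" and pos: "\<forall>t\<in>set L. w t > 0" and a: "1 < \<alpha>"
    and i: "1 \<le> i" "i \<le> length L"
  shows "i \<le> thr L w \<alpha> i" "thr L w \<alpha> i \<le> length L"
    "\<And>j. 1 \<le> j \<Longrightarrow> j \<le> length L \<Longrightarrow> (w (L ! (j - 1)) < \<alpha> * w (L ! (i - 1)) \<longleftrightarrow> j \<le> thr L w \<alpha> i)"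
proof -
  define c where "c = \<alpha> * w (L ! (i - 1))"
  define S where "S = {q. q < length L \<and> w (L ! q) < c}"
  have mono: "\<And>q q'. q' \<le> q \<Longrightarrow> q < length L \<Longrightarrow> w (L ! q') \<le> w (L ! q)"
  proof -
    fix q q' :: nat assume "q' \<le> q" "q < length L"
    then have "map w L ! q' \<le> map w L ! q" using sorted_nth_mono[OF sorted] by simp
    then show "w (L ! q') \<le> w (L ! q)" using \<open>q' \<le> q\<close> \<open>q < length L\<close> by simp
  qed
  have thr_eq: "thr L w \<alpha> i = card S"
    unfolding thr_def S_def c_def by (simp add: length_filter_conv_card)
  have S: "S = {..<card S}"
  proof (rule downclosed_eq_lessThan)
    show "finite S" by (simp add: S_def)
    fix q q' assume "q \<in> S" "q' < q"
    then show "q' \<in> S" using mono[of q' q] by (auto simp: S_def)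
  qed
  have wi: "w (L ! (i - 1)) > 0" using pos i by auto
  have "{..<i} \<subseteq> S"
  proof
    fix q assume "q \<in> {..<i}"
    then have "q \<le> i - 1" "q < length L" using i by auto
    then have "w (L ! q) \<le> w (L ! (i - 1))" using mono i by auto
    also have "\<dots> < c" using wi a unfolding c_def by simp
    finally show "q \<in> S" using \<open>q < length L\<close> by (simp add: S_def)
  qed
  then show "i \<le> thr L w \<alpha> i" using S thr_eq by (metis lessThan_subset_iff)
  have "S \<subseteq> {..<length L}" by (auto simp: S_def)
  then show "thr L w \<alpha> i \<le> length L" using S thr_eq by (metis lessThan_subset_iff)
  fix j assume j: "1 \<le> j" "j \<le> length L"
  have "w (L ! (j - 1)) < c \<longleftrightarrow> j - 1 \<in> S" using j by (auto simp: S_def)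
  also have "\<dots> \<longleftrightarrow> j - 1 < card S" using S by blast
  also have "\<dots> \<longleftrightarrow> j \<le> thr L w \<alpha> i" using j thr_eq by auto
  finally show "(w (L ! (j - 1)) < \<alpha> * w (L ! (i - 1)) \<longleftrightarrow> j \<le> thr L w \<alpha> i)" unfolding c_def .
qed

lemma chains_mono: "K \<subseteq> K' \<Longrightarrow> chains F K m \<subseteq> chains F K' m"
  by (auto simp: chains_def)

lemma boundaries_mono: "K \<subseteq> K' \<Longrightarrow> boundaries F K m \<subseteq> boundaries F K' m"
  unfolding boundaries_def using chains_mono by blast

lemma chains_insert_zero:
  "t \<notin> K \<Longrightarrow> chains F K m = {c \<in> chains F (insert t K) m. c t = 0}"
  by (auto simp: chains_def)

lemma cycles_insert_zero:
  "t \<notin> K \<Longrightarrow> cycles F K m = {c \<in> cycles F (insert t K) m. c t = 0}"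
  by (auto simp: cycles_def chains_def)

lemma dim_cyc_step:
  fixes W :: "('v::linorder set \<Rightarrow> 'f::field) set"
  assumes "finite K" "t \<notin> K" "fvs.subspace W"
  shows "int (fvs.dim (cycles TYPE('f) (insert t K) m \<inter> W)) =
     int (fvs.dim (cycles TYPE('f) K m \<inter> W)) + (if \<exists>v\<in>cycles TYPE('f) (insert t K) m \<inter> W. v t \<noteq> 0 then 1 else 0)"
proof -
  have fin: "finite (insert t K)" using assms(1) by simp
  have S: "fvs.subspace (cycles TYPE('f) (insert t K) m \<inter> W)"
    using cycles_subspace[OF fin] assms(3) by (rule fvs.subspace_inter)
  have sp: "cycles TYPE('f) (insert t K) m \<inter> W \<subseteq> fvs.span (delta ` insert t K)"
    using chains_span[OF fin, of m] by (auto simp: cycles_def)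
  have eq: "{v \<in> cycles TYPE('f) (insert t K) m \<inter> W. v t = 0} = cycles TYPE('f) K m \<inter> W"
    using cycles_insert_zero[OF assms(2)] by auto
  show ?thesis using dim_elim[OF S _ sp, of t] fin eq by simp
qed

lemma valid_step:
  assumes "valid_filtration L w" "1 \<le> i" "i \<le> length L"
  shows "set (take i L) = insert (L ! (i - 1)) (set (take (i - 1) L))"
    "L ! (i - 1) \<notin> set (take (i - 1) L)"
proof -
  have d: "distinct L" using assms(1) by (simp add: valid_filtration_def)
  have i: "i = Suc (i - 1)" "i - 1 < length L" using assms by auto
  have "take i L = take (i - 1) L @ [L ! (i - 1)]"
    using take_Suc_conv_app_nth[OF i(2)] i(1) by simp
  then show "set (take i L) = insert (L ! (i - 1)) (set (take (i - 1) L))" by simp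
  have "distinct (take i L)" using d by simp
  then show "L ! (i - 1) \<notin> set (take (i - 1) L)"
    using \<open>take i L = take (i - 1) L @ [L ! (i - 1)]\<close> by simp
qed

lemma prank_step:
  fixes L :: "'v::linorder set list"
  assumes "valid_filtration L w" "1 \<le> i" "i \<le> length L"
  shows "prank TYPE('f::field) L k i t - prank TYPE('f) L k (i - 1) t =
    (if \<exists>v\<in>cycles TYPE('f) (set (take i L)) k. v (L ! (i - 1)) \<noteq> 0 then 1 else 0)
  - (if \<exists>v\<in>cycles TYPE('f) (set (take i L)) k \<inter> boundaries TYPE('f) (set (take t L)) k. v (L ! (i - 1)) \<noteq> 0 then 1 else 0)"
proof -
  note st = valid_step[OF assms]
  have fin: "finite (set (take (i - 1) L))" by simp
  have B: "fvs.subspace (boundaries TYPE('f) (set (take t L)) k)"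
    by (rule boundaries_subspace) simp
  have U: "fvs.subspace (UNIV :: ('v set \<Rightarrow> 'f) set)" by (simp add: fvs.subspace_UNIV)
  show ?thesis
    unfolding prank_def st(1)
    using dim_cyc_step[OF fin st(2) B, of k] dim_cyc_step[OF fin st(2) U, of k]
    by simp
qed

lemma pmult_nonneg:
  fixes L :: "'v::linorder set list"
  assumes "valid_filtration L w" "1 \<le> i" "i \<le> length L"
  shows "pmult TYPE('f::field) L k i j \<ge> 0"
proof -
  have sub: "boundaries TYPE('f) (set (take (j - 1) L)) k \<subseteq> boundaries TYPE('f) (set (take j L)) k"
    by (rule boundaries_mono) (simp add: set_take_subset_set_take)
  have "pmult TYPE('f) L k i j = (prank TYPE('f) L k i (j - 1) - prank TYPE('f) L k (i - 1) (j - 1))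
      - (prank TYPE('f) L k i j - prank TYPE('f) L k (i - 1) j)"
    by (simp add: pmult_def)
  then show ?thesis
    unfolding prank_step[OF assms] using sub by auto
qed

lemma pmult_inf_nonneg:
  fixes L :: "'v::linorder set list"
  assumes "valid_filtration L w" "1 \<le> i" "i \<le> length L"
  shows "pmult_inf TYPE('f::field) L k i \<ge> 0"
  unfolding pmult_inf_def prank_step[OF assms] by auto

lemma per_i:
  fixes L :: "'v::linorder set list"
  assumes v: "valid_filtration L w" and pos: "\<forall>t\<in>set L. w t > 0" and a: "1 < \<alpha>"
    and i: "1 \<le> i" "i \<le> length L"
  defines "P \<equiv> (\<lambda>(b, d). d / ereal b \<ge> ereal \<alpha>)"
  defines "T \<equiv> thr L w \<alpha> i"
  shows "int (\<Sum>j\<in>{i<..length L}. size (filter_mset P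
            (if w (L ! (i - 1)) < w (L ! (j - 1))
             then replicate_mset (nat (pmult TYPE('f::field) L k i j)) (w (L ! (i - 1)), ereal (w (L ! (j - 1))))
             else {#})))
       + int (size (filter_mset P (replicate_mset (nat (pmult_inf TYPE('f) L k i)) (w (L ! (i - 1)), \<infinity>))))
       = prank TYPE('f) L k i T - prank TYPE('f) L k (i - 1) T"
proof -
  have sorted: "sorted (map w L)" using v by (simp add: valid_filtration_def)
  note th = thr_props[OF sorted pos a i, folded T_def]
  have wi: "w (L ! (i - 1)) > 0" using pos i by auto
  define g where "g t = prank TYPE('f) L k i t - prank TYPE('f) L k (i - 1) t" for t
  have cond: "(w (L ! (i - 1)) < w (L ! (j - 1)) \<and> P (w (L ! (i - 1)), ereal (w (L ! (j - 1))))) \<longleftrightarrow> T < j"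
    if j: "j \<in> {i<..length L}" for j
  proof -
    have "P (w (L ! (i - 1)), ereal (w (L ! (j - 1)))) \<longleftrightarrow> \<alpha> * w (L ! (i - 1)) \<le> w (L ! (j - 1))"
      using wi by (simp add: P_def pos_le_divide_eq)
    also have "\<dots> \<longleftrightarrow> \<not> (j \<le> T)" using th(3)[of j] j by auto
    finally have "P (w (L ! (i - 1)), ereal (w (L ! (j - 1)))) \<longleftrightarrow> T < j" by auto
    moreover have "\<alpha> * w (L ! (i - 1)) \<le> w (L ! (j - 1)) \<Longrightarrow> w (L ! (i - 1)) < w (L ! (j - 1))"
      using wi a by (smt (verit) mult_less_cancel_right1)
    ultimately show ?thesis
      using \<open>P _ \<longleftrightarrow> \<alpha> * _ \<le> _\<close> by blast
  qed
  have "(\<Sum>j\<in>{i<..length L}. size (filter_mset P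
            (if w (L ! (i - 1)) < w (L ! (j - 1))
             then replicate_mset (nat (pmult TYPE('f::field) L k i j)) (w (L ! (i - 1)), ereal (w (L ! (j - 1))))
             else {#})))
      = (\<Sum>j\<in>{i<..length L}. if T < j then nat (pmult TYPE('f) L k i j) else 0)"
    by (rule sum.cong[OF refl]) (use cond in \<open>auto simp: size_filter_replicate\<close>)
  also have "\<dots> = (\<Sum>j\<in>{T<..length L}. nat (pmult TYPE('f) L k i j))"
  proof -
    have "{j \<in> {i<..length L}. T < j} = {T<..length L}" using th(1) by auto
    then show ?thesis by (simp add: sum.inter_filter[symmetric])
  qed
  finally have s1: "int (\<Sum>j\<in>{i<..length L}. size (filter_mset P
            (if w (L ! (i - 1)) < w (L ! (j - 1))
             then replicate_mset (nat (pmult TYPE('f::field) L k i j)) (w (L ! (i - 1)), ereal (w (L ! (j - 1))))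
             else {#}))) = (\<Sum>j\<in>{T<..length L}. pmult TYPE('f) L k i j)"
    using pmult_nonneg[OF v i, where 'f='f, of k] by (simp add: of_nat_sum)
  have "(\<Sum>j\<in>{T<..length L}. pmult TYPE('f) L k i j) = (\<Sum>j\<in>{T<..length L}. g (j - 1) - g j)"
    by (rule sum.cong[OF refl]) (simp add: pmult_def g_def)
  also have "\<dots> = g T - g (length L)" by (rule telescope[OF th(2)])
  finally have s2: "(\<Sum>j\<in>{T<..length L}. pmult TYPE('f) L k i j) = g T - g (length L)" .
  have s3: "int (size (filter_mset P (replicate_mset (nat (pmult_inf TYPE('f) L k i)) (w (L ! (i - 1)), \<infinity>))))
      = g (length L)"
    using wi pmult_inf_nonneg[OF v i, of k, where 'f='f]
    by (simp add: P_def size_filter_replicate pmult_inf_def g_def)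
  show ?thesis using s1 s2 s3 by (simp add: g_def)
qed

lemma Pi_formula:
  fixes L :: "'v::linorder set list"
  assumes v: "valid_filtration L w" and pos: "\<forall>t\<in>set L. w t > 0" and a: "1 < \<alpha>"
  shows "int (Pi_count TYPE('f::field) L w k \<alpha>) =
     (\<Sum>i\<in>{1..length L}. prank TYPE('f) L k i (thr L w \<alpha> i) - prank TYPE('f) L k (i - 1) (thr L w \<alpha> i))"
proof -
  define P where "P = (\<lambda>(b::real, d). d / ereal b \<ge> ereal \<alpha>)"
  have "int (Pi_count TYPE('f::field) L w k \<alpha>) =
     (\<Sum>i\<in>{1..length L}. int (\<Sum>j\<in>{i<..length L}. size (filter_mset P
            (if w (L ! (i - 1)) < w (L ! (j - 1))
             then replicate_mset (nat (pmult TYPE('f::field) L k i j)) (w (L ! (i - 1)), ereal (w (L ! (j - 1))))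
             else {#})))
       + int (size (filter_mset P (replicate_mset (nat (pmult_inf TYPE('f) L k i)) (w (L ! (i - 1)), \<infinity>)))))"
    unfolding Pi_count_def dgm_def P_def[symmetric]
    by (simp add: size_filter_sum_mset sum.distrib)
  also have "\<dots> = (\<Sum>i\<in>{1..length L}. prank TYPE('f) L k i (thr L w \<alpha> i) - prank TYPE('f) L k (i - 1) (thr L w \<alpha> i))"
    by (rule sum.cong[OF refl]) (use per_i[OF v pos a] in \<open>auto simp: P_def\<close>)
  finally show ?thesis .
qed

lemma chains_insert_other: "card s \<noteq> m + 1 \<Longrightarrow> chains F (insert s K) m = chains F K m"
  by (auto simp: chains_def)

lemma cycles_insert_other: "card s \<noteq> m + 1 \<Longrightarrow> cycles F (insert s K) m = cycles F K m"
  by (simp add: cycles_def chains_insert_other)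

lemma boundaries_insert_other: "card s \<noteq> m + 2 \<Longrightarrow> boundaries F (insert s K) m = boundaries F K m"
  by (simp add: boundaries_def chains_insert_other)

lemma cycles_mono: "K \<subseteq> K' \<Longrightarrow> cycles F K m \<subseteq> cycles F K' m"
  unfolding cycles_def using chains_mono[of K K' F m] by blast

lemma valid_faces:
  assumes "valid_filtration L w" "t \<in> set L" "s \<noteq> {}" "s \<subset> t"
  shows "s \<in> set L"
proof -
  obtain q where q: "q < length L" "L ! q = t" using assms(2) by (meson in_set_conv_nth)
  then have "s \<in> set (take q L)" using assms(1,3,4) by (auto simp: valid_filtration_def)
  then show ?thesis using set_take_subset by fast
qed

lemma sum_reindex_f:
  fixes \<phi> :: "nat \<Rightarrow> int"
  assumes "p \<le> N"
  shows "(\<Sum>i\<in>{1..N+1}. if i = p + 1 then 0 else \<phi> (if i \<le> p then i else i - 1)) = (\<Sum>m\<in>{1..N}. \<phi> m)"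
proof -
  have "(\<Sum>i\<in>{1..N+1}. if i = p + 1 then 0 else \<phi> (if i \<le> p then i else i - 1))
      = (\<Sum>i\<in>{1..N+1} - {p+1}. \<phi> (if i \<le> p then i else i - 1))"
    by (subst sum.mono_neutral_right[of "{1..N+1}" "{1..N+1} - {p+1}"]) (auto intro: sum.cong)
  also have "\<dots> = (\<Sum>m\<in>{1..N}. \<phi> m)"
    by (rule sum.reindex_bij_witness[where i="\<lambda>m. if m \<le> p then m else m + 1"
          and j="\<lambda>i. if i \<le> p then i else i - 1"]) (use assms in auto)
  finally show ?thesis .
qed

locale ins_setup =
  fixes L :: "'v::linorder set list" and w :: "'v set \<Rightarrow> real"
    and \<sigma> :: "'v set" and a :: real and p :: nat and \<alpha> :: real
    and L' :: "'v set list" and w' :: "'v set \<Rightarrow> real"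
  assumes vL: "valid_filtration L w"
    and pos: "\<forall>t \<in> set L. w t > 0"
    and sig: "\<sigma> \<notin> set L"
    and apos: "a > 0"
    and p: "p \<le> length L"
    and L'_def: "L' = take p L @ \<sigma> # drop p L"
    and w'_def: "w' = w(\<sigma> := a)"
    and vL': "valid_filtration L' w'"
    and alpha: "1 < \<alpha>"
begin

definition f :: "nat \<Rightarrow> nat" where "f i = (if i \<le> p then i else i - 1)"

lemma len': "length L' = length L + 1"
  using p by (simp add: L'_def)

lemma nth_p: "L' ! p = \<sigma>"
  using p by (simp add: L'_def nth_append)

lemma sig_ne: "\<sigma> \<noteq> {}" "finite \<sigma>"
proof -
  have "p < length L'" using len' p by simp
  then have "finite (L' ! p) \<and> L' ! p \<noteq> {}" using vL' unfolding valid_filtration_def by blast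
  then show "\<sigma> \<noteq> {}" "finite \<sigma>" using nth_p by auto
qed

lemma K': "set (take i L') = (if i \<le> p then set (take (f i) L) else insert \<sigma> (set (take (f i) L)))"
proof (cases "i \<le> p")
  case True then show ?thesis using p by (simp add: L'_def f_def)
next
  case False
  define q where "q = i - p - 1"
  have q: "i = p + 1 + q" using False by (simp add: q_def)
  have "take i L' = take p L @ \<sigma> # take q (drop p L)"
    using p q by (simp add: L'_def)
  moreover have "take (f i) L = take p L @ take q (drop p L)"
    using False q by (simp add: f_def take_add)
  ultimately show ?thesis using False by auto
qed

lemma nth': "1 \<le> i \<Longrightarrow> i \<le> length L + 1 \<Longrightarrow> i \<noteq> p + 1 \<Longrightarrow> L' ! (i - 1) = L ! (f i - 1)"
proof (cases "i \<le> p")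
  case True
  assume "1 \<le> i"
  then have "i - 1 < length (take p L)" using True p by simp
  then show ?thesis using True by (simp add: L'_def f_def nth_append)
next
  case False
  assume i: "1 \<le> i" "i \<le> length L + 1" "i \<noteq> p + 1"
  then have ge: "i - 1 - p = Suc (i - 2 - p)" "\<not> i - 1 < p" using False by auto
  have lt: "length (take p L) = p" using p by simp
  have "L' ! (i - 1) = (\<sigma> # drop p L) ! (i - 1 - p)"
    unfolding L'_def using ge(2) lt by (simp add: nth_append)
  also have "\<dots> = drop p L ! (i - 2 - p)" using ge(1) by simp
  also have "\<dots> = L ! (p + (i - 2 - p))" using i p False by (subst nth_drop) auto
  also have "p + (i - 2 - p) = f i - 1" using False i by (auto simp: f_def)
  finally show ?thesis .
qed

lemma w'_L: "t \<in> set L \<Longrightarrow> w' t = w t"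
  using sig by (auto simp: w'_def)

lemma sorted_split: "\<forall>t \<in> set (take p L). w t \<le> a" "\<forall>t \<in> set (drop p L). a \<le> w t"
proof -
  have "sorted (map w' L')" using vL' by (simp add: valid_filtration_def)
  moreover have "map w' L' = map w (take p L) @ a # map w (drop p L)"
  proof -
    have e1: "map w' (take p L) = map w (take p L)" using w'_L by (auto dest: in_set_takeD)
    have e2: "map w' (drop p L) = map w (drop p L)" using w'_L by (auto dest: in_set_dropD)
    show ?thesis unfolding L'_def map_append list.map(2) e1 e2 by (simp add: w'_def)
  qed
  ultimately show "\<forall>t \<in> set (take p L). w t \<le> a" "\<forall>t \<in> set (drop p L). a \<le> w t"
    by (auto simp: sorted_append)
qed

lemma f_thr:
  assumes i: "1 \<le> i" "i \<le> length L + 1" "i \<noteq> p + 1"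
  shows "f (thr L' w' \<alpha> i) = thr L w \<alpha> (f i)"
proof -
  define c where "c = \<alpha> * w (L ! (f i - 1))"
  have c': "\<alpha> * w' (L' ! (i - 1)) = c"
  proof -
    have "f i - 1 < length L" using i p by (auto simp: f_def)
    then show ?thesis using nth'[OF i] w'_L c_def by simp
  qed
  define P where "P t = (w t < c)" for t
  have ft: "filter (\<lambda>t. w' t < c) L' = filter P (take p L) @ (if a < c then [\<sigma>] else []) @ filter P (drop p L)"
  proof -
    have e3: "filter (\<lambda>t. w' t < c) (take p L) = filter P (take p L)"
      by (rule filter_cong) (auto simp: P_def w'_L dest: in_set_takeD)
    have e4: "filter (\<lambda>t. w' t < c) (drop p L) = filter P (drop p L)"
      by (rule filter_cong) (auto simp: P_def w'_L dest: in_set_dropD)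
    have "w' \<sigma> = a" by (simp add: w'_def)
    then show ?thesis by (simp add: L'_def e3 e4)
  qed
  have tL: "thr L w \<alpha> (f i) = length (filter P (take p L)) + length (filter P (drop p L))"
    unfolding thr_def c_def[symmetric] P_def[symmetric]
    by (metis append_take_drop_id filter_append length_append)
  show ?thesis
  proof (cases "a < c")
    case True
    then have "filter P (take p L) = take p L" using sorted_split(1) by (fastforce simp: filter_id_conv P_def)
    then show ?thesis using True p tL ft c' by (simp add: thr_def f_def)
  next
    case False
    then have "filter P (drop p L) = []" using sorted_split(2) by (force simp: P_def filter_empty_conv)
    moreover have "length (filter P (take p L)) \<le> p" using p
      using length_filter_le[of P "take p L"] by simp
    ultimately show ?thesis using False tL ft c' by (simp add: thr_def f_def)
  qed
qed

lemma f_prev: "1 \<le> i \<Longrightarrow> i \<noteq> p + 1 \<Longrightarrow> f (i - 1) = f i - 1"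
  by (auto simp: f_def)

lemma f_mono: "i \<le> j \<Longrightarrow> f i \<le> f j"
  by (auto simp: f_def)

lemma f_p1: "f (p + 1) = f p"
  by (simp add: f_def)

lemma pos': "\<forall>t \<in> set L'. w' t > 0"
  using pos apos by (auto simp: L'_def w'_def dest: in_set_takeD in_set_dropD)

lemma bd_vanish:
  assumes "c \<in> chains F (set L) m"
  shows "bd c \<sigma> = 0"
proof -
  have E: "{v. v \<notin> \<sigma> \<and> c (insert v \<sigma>) \<noteq> 0} = {}"
  proof (rule ccontr)
    assume "{v. v \<notin> \<sigma> \<and> c (insert v \<sigma>) \<noteq> 0} \<noteq> {}"
    then obtain v where v: "v \<notin> \<sigma>" "c (insert v \<sigma>) \<noteq> 0" by auto
    then have "insert v \<sigma> \<in> set L" using assms by (auto simp: chains_def)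
    then have "\<sigma> \<in> set L" using valid_faces[OF vL _ sig_ne(1)] v(1) by blast
    then show False using sig by simp
  qed
  show ?thesis unfolding bd_def by (subst E) simp
qed

end

context ins_setup begin

lemma Pi_L: "int (Pi_count TYPE('f::field) L w k \<alpha>) =
   (\<Sum>m\<in>{1..length L}. prank TYPE('f) L k m (thr L w \<alpha> m) - prank TYPE('f) L k (m - 1) (thr L w \<alpha> m))"
  by (rule Pi_formula[OF vL pos alpha])

lemma Pi_L': "int (Pi_count TYPE('f::field) L' w' k \<alpha>) =
   (\<Sum>i\<in>{1..length L + 1}. prank TYPE('f) L' k i (thr L' w' \<alpha> i) - prank TYPE('f) L' k (i - 1) (thr L' w' \<alpha> i))"
  using Pi_formula[OF vL' pos' alpha] len' by simp

lemma reindex_Pi: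
  "(\<Sum>i\<in>{1..length L + 1}. if i = p + 1 then 0 else
      prank TYPE('f::field) L k (f i) (f (thr L' w' \<alpha> i)) - prank TYPE('f) L k (f (i - 1)) (f (thr L' w' \<alpha> i)))
   = int (Pi_count TYPE('f) L w k \<alpha>)"
proof -
  have "(\<Sum>i\<in>{1..length L + 1}. if i = p + 1 then 0 else
      prank TYPE('f::field) L k (f i) (f (thr L' w' \<alpha> i)) - prank TYPE('f) L k (f (i - 1)) (f (thr L' w' \<alpha> i)))
    = (\<Sum>i\<in>{1..length L + 1}. if i = p + 1 then 0 else
      (\<lambda>m. prank TYPE('f::field) L k m (thr L w \<alpha> m) - prank TYPE('f) L k (m - 1) (thr L w \<alpha> m)) (if i \<le> p then i else i - 1))"
  proof (rule sum.cong[OF refl])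
    fix i assume i: "i \<in> {1..length L + 1}"
    show "(if i = p + 1 then 0 else
      prank TYPE('f::field) L k (f i) (f (thr L' w' \<alpha> i)) - prank TYPE('f) L k (f (i - 1)) (f (thr L' w' \<alpha> i)))
      = (if i = p + 1 then 0 else
      (\<lambda>m. prank TYPE('f::field) L k m (thr L w \<alpha> m) - prank TYPE('f) L k (m - 1) (thr L w \<alpha> m)) (if i \<le> p then i else i - 1))"
    proof (cases "i = p + 1")
      case False
      have "1 \<le> i" "i \<le> length L + 1" using i by auto
      note a = f_thr[OF this False] f_prev[OF this(1) False]
      show ?thesis using False unfolding a f_def[symmetric] by simp
    qed simp
  qed
  also have "\<dots> = int (Pi_count TYPE('f) L w k \<alpha>)"
    unfolding Pi_L by (rule sum_reindex_f[OF p])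
  finally show ?thesis .
qed

lemma case_other:
  assumes "card \<sigma> \<noteq> k + 1" "card \<sigma> \<noteq> k + 2"
  shows "Pi_count TYPE('f::field) L' w' k \<alpha> = Pi_count TYPE('f) L w k \<alpha>"
proof -
  have pr: "prank TYPE('f) L' k i j = prank TYPE('f) L k (f i) (f j)" for i j
    unfolding prank_def K' using assms
    by (simp add: cycles_insert_other boundaries_insert_other)
  have "int (Pi_count TYPE('f::field) L' w' k \<alpha>) =
    (\<Sum>i\<in>{1..length L + 1}. if i = p + 1 then 0 else
      prank TYPE('f::field) L k (f i) (f (thr L' w' \<alpha> i)) - prank TYPE('f) L k (f (i - 1)) (f (thr L' w' \<alpha> i)))"
    unfolding Pi_L' pr by (rule sum.cong[OF refl]) (auto simp: f_def)
  then have "int (Pi_count TYPE('f::field) L' w' k \<alpha>) = int (Pi_count TYPE('f) L w k \<alpha>)"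
    by (simp only: reindex_Pi)
  then show ?thesis by simp
qed


lemma telescope_up:
  fixes e :: "nat \<Rightarrow> int"
  shows "(\<Sum>i\<in>{1..M}. e i - e (i - 1)) = e M - e 0"
proof -
  have "{1..M} = {0<..M}" by auto
  then have "(\<Sum>i\<in>{1..M}. e i - e (i - 1)) = (\<Sum>i\<in>{0<..M}. (- e) (i - 1) - (- e) i)"
    by simp
  also have "\<dots> = e M - e 0" by (subst telescope) auto
  finally show ?thesis .
qed

lemma case_k:
  assumes "card \<sigma> = k + 1"
  shows "int (Pi_count TYPE('f::field) L w k \<alpha>) \<le> int (Pi_count TYPE('f) L' w' k \<alpha>)"
    "int (Pi_count TYPE('f) L' w' k \<alpha>) \<le> int (Pi_count TYPE('f) L w k \<alpha>) + 1"
proof -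
  define \<epsilon> where "\<epsilon> i = int (fvs.dim (cycles TYPE('f) (set (take i L')) k))
     - int (fvs.dim (cycles TYPE('f) (set (take (f i) L)) k))" for i
  have Bsame: "boundaries TYPE('f) (set (take j L')) k = boundaries TYPE('f) (set (take (f j) L)) k" for j
    unfolding K' using assms by (simp add: boundaries_insert_other)
  have ZB: "cycles TYPE('f) (set (take i L')) k \<inter> boundaries TYPE('f) (set (take (f j) L)) k
      = cycles TYPE('f) (set (take (f i) L)) k \<inter> boundaries TYPE('f) (set (take (f j) L)) k" for i j
  proof (cases "i \<le> p")
    case True then show ?thesis unfolding K' by simp
  next
    case False
    have ns: "\<sigma> \<notin> set (take (f i) L)" using sig by (meson in_set_takeD)
    have van: "v \<sigma> = 0" if vb: "v \<in> boundaries TYPE('f) (set (take (f j) L)) k" for v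
    proof -
      obtain c where c: "c \<in> chains TYPE('f) (set (take (f j) L)) (k + 1)" "v = bd c"
        using vb unfolding boundaries_def by blast
      have "c \<in> chains TYPE('f) (set L) (k + 1)"
        using c(1) chains_mono[OF set_take_subset] by blast
      then show ?thesis using bd_vanish c(2) by blast
    qed
    show ?thesis unfolding K' using False cycles_insert_zero[OF ns, of "TYPE('f)" k] van
      by auto
  qed
  have pr: "prank TYPE('f) L' k i j = prank TYPE('f) L k (f i) (f j) + \<epsilon> i" for i j
    unfolding prank_def Bsame ZB \<epsilon>_def by simp
  have e0: "\<epsilon> 0 = 0" by (simp add: \<epsilon>_def f_def)
  have eN: "\<epsilon> (length L + 1) \<in> {0, 1}"
  proof -
    have N: "\<not> length L + 1 \<le> p" "f (length L + 1) = length L" using p by (auto simp: f_def)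
    have ns: "\<sigma> \<notin> set (take (length L) L)" using sig by simp
    have U: "fvs.subspace (UNIV :: ('v set \<Rightarrow> 'f) set)" by (simp add: fvs.subspace_UNIV)
    show ?thesis unfolding \<epsilon>_def K' using N dim_cyc_step[OF _ ns U, of k] by simp
  qed
  have "int (Pi_count TYPE('f::field) L' w' k \<alpha>) =
    (\<Sum>i\<in>{1..length L + 1}. (if i = p + 1 then 0 else
      prank TYPE('f::field) L k (f i) (f (thr L' w' \<alpha> i)) - prank TYPE('f) L k (f (i - 1)) (f (thr L' w' \<alpha> i)))
      + (\<epsilon> i - \<epsilon> (i - 1)))"
    unfolding Pi_L' pr by (rule sum.cong[OF refl]) (auto simp: f_def)
  also have "\<dots> = int (Pi_count TYPE('f) L w k \<alpha>) + (\<epsilon> (length L + 1) - \<epsilon> 0)"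
    by (simp only: sum.distrib reindex_Pi telescope_up)
  finally have "int (Pi_count TYPE('f::field) L' w' k \<alpha>) = int (Pi_count TYPE('f) L w k \<alpha>) + \<epsilon> (length L + 1)"
    using e0 by simp
  then show "int (Pi_count TYPE('f::field) L w k \<alpha>) \<le> int (Pi_count TYPE('f) L' w' k \<alpha>)"
    "int (Pi_count TYPE('f) L' w' k \<alpha>) \<le> int (Pi_count TYPE('f) L w k \<alpha>) + 1"
    using eN by auto
qed

end

lemma bdx_formula:
  fixes K :: "'v::linorder set set"
  assumes K: "finite K" and s: "s \<notin> K" and cs: "card s = m + 2"
  shows "boundaries TYPE('f::field) (insert s K) m =
     {b + fscale t (bd (delta s :: 'v set \<Rightarrow> 'f)) | b t. b \<in> boundaries TYPE('f) K m}"
proof -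
  have fin: "finite (insert s K)" using K by simp
  have ds: "delta s \<in> chains TYPE('f) (insert s K) (m + 1)"
    using cs by (auto simp: chains_def delta_def)
  show ?thesis
  proof (intro set_eqI iffI)
    fix y assume "y \<in> boundaries TYPE('f) (insert s K) m"
    then obtain c where c: "c \<in> chains TYPE('f) (insert s K) (m + 1)" "y = bd c"
      unfolding boundaries_def by blast
    define c0 where "c0 = c - fscale (c s) (delta s)"
    have c0: "c0 \<in> chains TYPE('f) K (m + 1)"
      using c(1) by (auto simp: chains_def c0_def delta_def)
    have "c = c0 + fscale (c s) (delta s)" by (simp add: c0_def)
    then have "bd c = bd c0 + bd (fscale (c s) (delta s))"
      using c0 ds chains_mono[of K "insert s K"]
      by (metis bd_add[OF fin] chains_supp chains_subspace fvs.subspace_scale subset_insertI subsetD)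
    also have "bd (fscale (c s) (delta s)) = fscale (c s) (bd (delta s))"
      using ds bd_scale[OF fin] chains_supp by blast
    finally have "y = bd c0 + fscale (c s) (bd (delta s))" unfolding c(2) .
    moreover have "bd c0 \<in> boundaries TYPE('f) K m" using c0 by (simp add: boundaries_def)
    ultimately show "y \<in> {b + fscale t (bd (delta s :: 'v set \<Rightarrow> 'f)) | b t. b \<in> boundaries TYPE('f) K m}"
      by blast
  next
    fix y assume "y \<in> {b + fscale t (bd (delta s :: 'v set \<Rightarrow> 'f)) | b t. b \<in> boundaries TYPE('f) K m}"
    then obtain c0 t where c0: "c0 \<in> chains TYPE('f) K (m + 1)" and y: "y = bd c0 + fscale t (bd (delta s))"
      unfolding boundaries_def by blast
    have c0': "c0 \<in> chains TYPE('f) (insert s K) (m + 1)" using c0 chains_mono[of K "insert s K"] by blast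
    have sc: "fscale t (delta s) \<in> chains TYPE('f) (insert s K) (m + 1)"
      using ds chains_subspace fvs.subspace_scale by blast
    have "bd (c0 + fscale t (delta s)) = y"
      using y bd_add[OF fin] bd_scale[OF fin] chains_supp c0' sc ds by metis
    moreover have "c0 + fscale t (delta s) \<in> chains TYPE('f) (insert s K) (m + 1)"
      using c0' sc chains_subspace fvs.subspace_add by blast
    ultimately show "y \<in> boundaries TYPE('f) (insert s K) m" unfolding boundaries_def by blast
  qed
qed

lemma sum01_le1:
  fixes D :: "nat \<Rightarrow> int"
  assumes fin: "finite A" and d01: "\<And>i. i \<in> A \<Longrightarrow> D i \<in> {0, 1}"
    and one: "\<And>i j. i \<in> A \<Longrightarrow> j \<in> A \<Longrightarrow> i < j \<Longrightarrow> D i = 1 \<Longrightarrow> D j = 0"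
  shows "0 \<le> sum D A" "sum D A \<le> 1"
proof -
  show "0 \<le> sum D A" by (intro sum_nonneg) (use d01 in force)
  have "sum D A = (\<Sum>i\<in>A. if D i = 1 then 1 else 0)"
    by (rule sum.cong[OF refl]) (use d01 in auto)
  also have "\<dots> = int (card {i \<in> A. D i = 1})"
    using fin by (simp add: sum.If_cases Int_def conj_commute)
  also have "card {i \<in> A. D i = 1} \<le> 1"
  proof -
    have "\<forall>i\<in>{i \<in> A. D i = 1}. \<forall>j\<in>{i \<in> A. D i = 1}. i = j"
      using one by (metis (mono_tags, lifting) linorder_neqE_nat mem_Collect_eq zero_neq_one)
    then show ?thesis using card_le_Suc0_iff_eq[of "{i \<in> A. D i = 1}"] fin by simp
  qed
  finally show "sum D A \<le> 1" by simp
qed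

context ins_setup begin

lemma thr'_mono:
  assumes "1 \<le> i1" "i1 \<le> i2" "i2 \<le> length L + 1"
  shows "thr L' w' \<alpha> i1 \<le> thr L' w' \<alpha> i2"
proof -
  have s: "sorted (map w' L')" using vL' by (simp add: valid_filtration_def)
  have l: "length L' = length L + 1" by (rule len')
  have i1: "i1 \<le> length L'" and i2: "i2 \<le> length L'" using assms l by auto
  note t1 = thr_props[OF s pos' alpha assms(1) i1, unfolded l]
  note t2 = thr_props[OF s pos' alpha order_trans[OF assms(1,2)] i2, unfolded l]
  define j where "j = thr L' w' \<alpha> i1"
  have j: "1 \<le> j" "j \<le> length L + 1" using t1(1,2) assms unfolding j_def by auto
  have "w' (L' ! (i1 - 1)) \<le> w' (L' ! (i2 - 1))"
  proof -
    have "map w' L' ! (i1 - 1) \<le> map w' L' ! (i2 - 1)"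
      by (rule sorted_nth_mono[OF s]) (use assms l in auto)
    then show ?thesis using assms l by simp
  qed
  moreover have "w' (L' ! (j - 1)) < \<alpha> * w' (L' ! (i1 - 1))"
    using t1(3)[OF j] assms unfolding j_def by simp
  ultimately have "w' (L' ! (j - 1)) < \<alpha> * w' (L' ! (i2 - 1))"
    using alpha by (smt (verit) mult_left_mono)
  then show ?thesis using t2(3)[OF j] assms unfolding j_def by simp
qed

lemma case_k1:
  assumes cs: "card \<sigma> = k + 2"
  shows "int (Pi_count TYPE('f::field) L w k \<alpha>) - 1 \<le> int (Pi_count TYPE('f) L' w' k \<alpha>)"
    "int (Pi_count TYPE('f) L' w' k \<alpha>) \<le> int (Pi_count TYPE('f) L w k \<alpha>)"
proof -
  define Z where "Z m = cycles TYPE('f) (set (take m L)) k" for m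
  define B where "B m = boundaries TYPE('f) (set (take m L)) k" for m
  define Bx where "Bx m = boundaries TYPE('f) (insert \<sigma> (set (take m L))) k" for m
  define x where "x = bd (delta \<sigma> :: 'v set \<Rightarrow> 'f)"
  define E where "E m j = int (fvs.dim (Z m \<inter> boundaries TYPE('f) (set (take j L')) k))
        - int (fvs.dim (Z m \<inter> B (f j)))" for m j
  have ns: "\<sigma> \<notin> set (take m L)" for m using sig by (meson in_set_takeD)
  have Bx_eq: "Bx m = {b + fscale t x | b t. b \<in> B m}" for m
    unfolding Bx_def B_def x_def by (rule bdx_formula[OF _ ns cs]) simp
  have Z': "cycles TYPE('f) (set (take i L')) k = Z (f i)" for i
    unfolding K' Z_def using cycles_insert_other[of \<sigma> k "TYPE('f)"] cs by simp
  have B': "boundaries TYPE('f) (set (take j L')) k = (if j \<le> p then B (f j) else Bx (f j))" for j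
    unfolding K' B_def Bx_def by (cases "j \<le> p") (simp_all only: if_True if_False)
  have Zsub: "fvs.subspace (Z m)" for m unfolding Z_def by (rule cycles_subspace) simp
  have Bsub: "fvs.subspace (B m)" for m unfolding B_def by (rule boundaries_subspace) simp
  have Bxsub: "fvs.subspace (Bx m)" for m unfolding Bx_def by (rule boundaries_subspace) simp
  have BBx: "B m \<subseteq> Bx m" for m unfolding B_def Bx_def by (rule boundaries_mono) auto
  have Zmono: "m \<le> m' \<Longrightarrow> Z m \<subseteq> Z m'" for m m'
    unfolding Z_def by (rule cycles_mono) (rule set_take_subset_set_take)
  have Bmono: "m \<le> m' \<Longrightarrow> B m \<subseteq> B m'" for m m'
    unfolding B_def by (rule boundaries_mono) (rule set_take_subset_set_take)
  have Bxmono: "m \<le> m' \<Longrightarrow> Bx m \<subseteq> Bx m'" for m m'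
    unfolding Bx_def by (intro boundaries_mono insert_mono set_take_subset_set_take)
  have E_char: "E m j = (if p < j \<and> (\<exists>v\<in>Z m \<inter> Bx (f j). v \<notin> B (f j)) then 1 else 0)" for m j
  proof (cases "p < j")
    case False then show ?thesis unfolding E_def B' by simp
  next
    case True
    show ?thesis
    proof (cases "\<exists>v\<in>Z m \<inter> Bx (f j). v \<notin> B (f j)")
      case False
      then have "Z m \<inter> Bx (f j) = Z m \<inter> B (f j)" using BBx by blast
      then show ?thesis using True False unfolding E_def B' by simp
    next
      case wit: True
      then obtain y where y: "y \<in> Z m" "y \<in> Bx (f j)" "y \<notin> B (f j)" by blast
      have "fvs.dim (Z m \<inter> Bx (f j)) = fvs.dim (Z m \<inter> B (f j)) + 1"
      proof (rule dim_one_step)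
        show "fvs.subspace (Z m \<inter> B (f j))" using Zsub Bsub by (rule fvs.subspace_inter)
        show "fvs.subspace (Z m \<inter> Bx (f j))" using Zsub Bxsub by (rule fvs.subspace_inter)
        show "Z m \<inter> B (f j) \<subseteq> Z m \<inter> Bx (f j)" using BBx by blast
        show "finite (delta ` set (take m L) :: ('v set \<Rightarrow> 'f) set)" by simp
        show "Z m \<inter> Bx (f j) \<subseteq> fvs.span (delta ` set (take m L))"
          using chains_span[of "set (take m L)" k, where 'f='f] unfolding Z_def cycles_def by auto
        show "y \<in> Z m \<inter> Bx (f j)" "y \<notin> Z m \<inter> B (f j)" using y by auto
        fix v assume v: "v \<in> Z m \<inter> Bx (f j)"
        obtain b t where bt: "b \<in> B (f j)" "v = b + fscale t x" using v Bx_eq by blast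
        obtain b' t' where bt': "b' \<in> B (f j)" "y = b' + fscale t' x" using y(2) Bx_eq by blast
        have t': "t' \<noteq> 0"
        proof
          assume "t' = 0"
          then have "y = b'" using bt'(2) by (simp only: fvs.scale_zero_left add_0_right)
          then show False using y(3) bt'(1) by simp
        qed
        have eq: "v - fscale (t / t') y = b - fscale (t / t') b'"
          using t' unfolding bt bt' by (simp add: fun_eq_iff algebra_simps)
        have "b - fscale (t / t') b' \<in> B (f j)"
          using Bsub bt(1) bt'(1) by (metis fvs.subspace_diff fvs.subspace_scale)
        moreover have "v - fscale (t / t') y \<in> Z m"
          using Zsub v y(1) by (metis IntD1 fvs.subspace_diff fvs.subspace_scale)
        ultimately have "v - fscale (t / t') y \<in> Z m \<inter> B (f j)" using eq by simp
        then show "\<exists>c. v - fscale c y \<in> Z m \<inter> B (f j)" by blast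
      qed
      then show ?thesis using True wit unfolding E_def B' by simp
    qed
  qed
  have pr: "prank TYPE('f) L' k i j = prank TYPE('f) L k (f i) (f j) - E (f i) j" for i j
    unfolding prank_def E_def Z' Z_def B_def by simp
  define D where "D i = E (f i) (thr L' w' \<alpha> i) - E (f i - 1) (thr L' w' \<alpha> i)" for i
  have D01: "D i \<in> {0, 1}" for i
  proof -
    have "Z (f i - 1) \<subseteq> Z (f i)" by (rule Zmono) simp
    then show ?thesis unfolding D_def E_char by auto
  qed
  have one: "D i2 = 0" if i: "i1 \<in> {1..length L + 1} - {p + 1}" "i2 \<in> {1..length L + 1} - {p + 1}"
    "i1 < i2" "D i1 = 1" for i1 i2
  proof -
    define j1 where "j1 = thr L' w' \<alpha> i1"
    define j2 where "j2 = thr L' w' \<alpha> i2"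
    have j12: "j1 \<le> j2" unfolding j1_def j2_def by (rule thr'_mono) (use i in auto)
    have "E (f i1) j1 = 1" using i(4) D01[of i1] E_char unfolding D_def j1_def
      by (auto split: if_splits)
    then obtain v where pj1: "p < j1" and v: "v \<in> Z (f i1)" "v \<in> Bx (f j1)" "v \<notin> B (f j1)"
      unfolding E_char by (auto split: if_splits)
    have pj2: "p < j2" using pj1 j12 by simp
    have fj: "f j1 \<le> f j2" using j12 by (rule f_mono)
    have i2: "1 \<le> i2" "i2 \<noteq> p + 1" "i1 \<le> i2 - 1" using i by auto
    have "f i1 \<le> f (i2 - 1)" using i2(3) by (rule f_mono)
    then have fi: "f i1 \<le> f i2 - 1" using f_prev[OF i2(1,2)] by simp
    have v2: "v \<in> Z (f i2 - 1)" "v \<in> Bx (f j2)" using v Zmono[OF fi] Bxmono[OF fj] by auto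
    show "D i2 = 0"
    proof (cases "v \<in> B (f j2)")
      case False
      then have "E (f i2 - 1) j2 = 1" unfolding E_char using pj2 v2 by auto
      moreover have "E (f i2) j2 \<le> 1" by (simp add: E_char)
      ultimately show ?thesis using D01[of i2] unfolding D_def j2_def[symmetric] by auto
    next
      case True
      obtain b t where bt: "b \<in> B (f j1)" "v = b + fscale t x" using v(2) Bx_eq by blast
      have t: "t \<noteq> 0"
      proof
        assume "t = 0"
        then have "v = b" using bt(2) by (simp only: fvs.scale_zero_left add_0_right)
        then show False using v(3) bt(1) by simp
      qed
      have b2: "b \<in> B (f j2)" using bt(1) Bmono[OF fj] by auto
      have "x = fscale (1 / t) (v - b)" using t bt(2) by (simp add: fun_eq_iff)
      then have x2: "x \<in> B (f j2)" using Bsub True b2 by (metis fvs.subspace_diff fvs.subspace_scale)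
      have "Bx (f j2) \<subseteq> B (f j2)"
      proof
        fix u assume "u \<in> Bx (f j2)"
        then obtain b0 t0 where "b0 \<in> B (f j2)" "u = b0 + fscale t0 x" using Bx_eq by blast
        then show "u \<in> B (f j2)" using Bsub[of "f j2"] x2 by (metis fvs.subspace_add fvs.subspace_scale)
      qed
      then have "E (f i2) j2 = 0" unfolding E_char by auto
      moreover have "E (f i2 - 1) j2 \<ge> 0" by (simp add: E_char)
      ultimately show ?thesis using D01[of i2] unfolding D_def j2_def[symmetric] by auto
    qed
  qed
  have "int (Pi_count TYPE('f::field) L' w' k \<alpha>) =
    (\<Sum>i\<in>{1..length L + 1}. (if i = p + 1 then 0 else
      prank TYPE('f::field) L k (f i) (f (thr L' w' \<alpha> i)) - prank TYPE('f) L k (f (i - 1)) (f (thr L' w' \<alpha> i)))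
      - (if i = p + 1 then 0 else D i))"
  proof -
    have "\<And>i. i \<in> {1..length L + 1} \<Longrightarrow>
      prank TYPE('f) L' k i (thr L' w' \<alpha> i) - prank TYPE('f) L' k (i - 1) (thr L' w' \<alpha> i) =
      (if i = p + 1 then 0 else
      prank TYPE('f::field) L k (f i) (f (thr L' w' \<alpha> i)) - prank TYPE('f) L k (f (i - 1)) (f (thr L' w' \<alpha> i)))
      - (if i = p + 1 then 0 else D i)"
      unfolding pr D_def using f_prev by (auto simp: f_def)
    then show ?thesis unfolding Pi_L' by (rule sum.cong[OF refl])
  qed
  also have "\<dots> = int (Pi_count TYPE('f) L w k \<alpha>) - (\<Sum>i\<in>{1..length L + 1}. if i = p + 1 then 0 else D i)"
    by (simp only: sum_subtractf reindex_Pi)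
  also have "(\<Sum>i\<in>{1..length L + 1}. if i = p + 1 then 0 else D i) = (\<Sum>i\<in>{1..length L + 1} - {p + 1}. D i)"
    by (subst sum.mono_neutral_right[of "{1..length L + 1}" "{1..length L + 1} - {p+1}"]) (auto intro: sum.cong)
  finally have eq: "int (Pi_count TYPE('f::field) L' w' k \<alpha>) =
     int (Pi_count TYPE('f) L w k \<alpha>) - (\<Sum>i\<in>{1..length L + 1} - {p + 1}. D i)" .
  have "0 \<le> (\<Sum>i\<in>{1..length L + 1} - {p + 1}. D i)" "(\<Sum>i\<in>{1..length L + 1} - {p + 1}. D i) \<le> 1"
    by (rule sum01_le1[OF _ D01 one]; simp)+
  then show "int (Pi_count TYPE('f::field) L w k \<alpha>) - 1 \<le> int (Pi_count TYPE('f) L' w' k \<alpha>)"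
    "int (Pi_count TYPE('f) L' w' k \<alpha>) \<le> int (Pi_count TYPE('f) L w k \<alpha>)"
    using eq by auto
qed

end

theorem lemma6p2:
  fixes L :: "('v::linorder) set list" and w :: "'v set \<Rightarrow> real"
    and \<sigma> :: "'v set" and a :: real and p :: nat and k :: nat and \<alpha> :: real
  assumes "valid_filtration L w"
    and "\<forall>\<tau> \<in> set L. w \<tau> > 0"
    and "\<sigma> \<notin> set L"
    and "a > 0"
    and "p \<le> length L"
    and "insert_simplex L w \<sigma> a p = (L', w')"
    and "valid_filtration L' w'"
    and "1 < \<alpha>"
    and "1 \<le> k"
  shows "(card \<sigma> - 1 \<in> {k, k + 1} \<longrightarrow>
            int (Pi_count TYPE('f::field) L w k \<alpha>) - 1 \<le> int (Pi_count TYPE('f) L' w' k \<alpha>) \<and>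
            int (Pi_count TYPE('f) L' w' k \<alpha>) \<le> int (Pi_count TYPE('f) L w k \<alpha>) + 1)
       \<and> (card \<sigma> - 1 \<notin> {k, k + 1} \<longrightarrow>
            Pi_count TYPE('f) L' w' k \<alpha> = Pi_count TYPE('f) L w k \<alpha>)"
proof -
  have L': "L' = take p L @ \<sigma> # drop p L" and w': "w' = w(\<sigma> := a)"
    using assms(6) by (auto simp: insert_simplex_def)
  interpret ins_setup L w \<sigma> a p \<alpha> L' w'
    by unfold_locales (use assms L' w' in auto)
  have iff: "card \<sigma> - 1 \<in> {k, k + 1} \<longleftrightarrow> card \<sigma> = k + 1 \<or> card \<sigma> = k + 2"
    using assms(9) by auto
  show ?thesis
  proof (cases "card \<sigma> = k + 1")
    case True
    then show ?thesis using case_k[OF True, where 'f='f] iff by auto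
  next
    case c1: False
    show ?thesis
    proof (cases "card \<sigma> = k + 2")
      case True
      then show ?thesis using case_k1[OF True, where 'f='f] iff by auto
    next
      case False
      then show ?thesis using case_other[OF c1 False, where 'f='f] iff c1 by auto
    qed
  qed
qed

end
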